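(* For all non-negative integers $m$ and $n$, \[ \overline{ {m+n \brack n} }_{q,t} = \sum_{k=0}^{\min\{m ,n \}} t^k q^{k(k+1)/2} (-1/t;q)_{k} {m \brack k}_{q} {n \brack k}_{q}. \]
   Context: An overpartition is a partition in which the last occurrence of each distinct part size may be overlined; its weight $|\lambda|$ is the sum of its parts. $\overline{{m+n \brack n}}_{q,t}=\sum_{\lambda} t^{\#_o(\lambda)} q^{|\lambda|}$, the sum over all overpartitions $\lambda$ with largest part at most $m$ and at most $n$ parts, $\#_o(\lambda)$ being the number of overlined parts. ${a \brack b}_q=\frac{(q;q)_{a}}{(q;q)_b(q;q)_{a-b}}$ is the Gaussian polynomial and $(x;q)_k=\prod_{j=1}^k(1-xq^{j-1})$; the product $t^k(-1/t;q)_k=\prod_{j=1}^k(t+q^{j-1})$ is a polynomial in $t$. *)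

theory Defs
  imports Main "HOL-Library.Multiset"
begin

text \<open>An overpartition with largest part at most m and at most n parts is encoded as a
  pair (P, Ov): P is the multiset of (positive) parts, O is the set of distinct part sizes
  whose last occurrence is overlined (so O is a subset of the set of part sizes).\<close>
definition overpartitions :: "nat \<Rightarrow> nat \<Rightarrow> (nat multiset \<times> nat set) set" where
  "overpartitions m n = {(P, Ov). (\<forall>x\<in>#P. 0 < x \<and> x \<le> m) \<and> size P \<le> n \<and> Ov \<subseteq> set_mset P}"

definition overline_gauss :: "nat \<Rightarrow> nat \<Rightarrow> 'a::comm_ring_1 \<Rightarrow> 'a \<Rightarrow> 'a" where
  "overline_gauss m n q t = (\<Sum>(P, Ov)\<in>overpartitions m n. t ^ card Ov * q ^ sum_mset P)"

definition qpoch :: "'a::comm_ring_1 \<Rightarrow> 'a \<Rightarrow> nat \<Rightarrow> 'a" where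
  "qpoch x q k = (\<Prod>j<k. 1 - x * q ^ j)"

definition gauss_binom :: "nat \<Rightarrow> nat \<Rightarrow> 'a::field \<Rightarrow> 'a" where
  "gauss_binom a b q = qpoch q q a / (qpoch q q b * qpoch q q (a - b))"

end

theory Submission imports Defs begin

definition Bq :: "'a::field \<Rightarrow> nat \<Rightarrow> nat \<Rightarrow> 'a" where
  "Bq q a k = (if k \<le> a then gauss_binom a k q else 0)"

lemma qpoch_Suc: "qpoch x q (Suc a) = qpoch x q a * (1 - x * q ^ a)"
  by (simp add: qpoch_def)

lemma qpoch_nz:
  fixes q :: "'a::field"
  assumes H: "\<forall>j\<in>{1..N}. q ^ j \<noteq> 1" and "a \<le> N"
  shows "qpoch q q a \<noteq> 0"
proof -
  have "\<forall>j\<in>{..<a}. 1 - q * q ^ j \<noteq> 0"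
  proof
    fix j assume "j \<in> {..<a}"
    then have "Suc j \<in> {1..N}" using assms by auto
    then have "q ^ Suc j \<noteq> 1" using H by blast
    then show "1 - q * q ^ j \<noteq> 0" by simp
  qed
  then show ?thesis unfolding qpoch_def by (simp add: prod_zero_iff)
qed

lemma alg_pascal:
  fixes q x y A J E u v :: "'a::field"
  assumes "J \<noteq> 0" "E \<noteq> 0" "u \<noteq> 0" "v \<noteq> 0"
  shows "A * (u + q * x * v) / (J * u * (E * v)) =
           A / (J * (E * v)) + q * x * (A / (J * u * E))"
    and "A * (q * y * u + v) / (J * u * (E * v)) =
           q * y * (A / (J * (E * v))) + A / (J * u * E)"
  using assms by (simp_all add: field_simps)

lemma Bq_gt: "a < k \<Longrightarrow> Bq q a k = 0" by (simp add: Bq_def)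

lemma Bq_0:
  fixes q :: "'a::field"
  assumes H: "\<forall>j\<in>{1..N}. q ^ j \<noteq> 1" and "a \<le> N"
  shows "Bq q a 0 = 1"
  using qpoch_nz[OF assms] by (simp add: Bq_def gauss_binom_def qpoch_def)

lemma Bq_diag:
  fixes q :: "'a::field"
  assumes H: "\<forall>j\<in>{1..N}. q ^ j \<noteq> 1" and "a \<le> N"
  shows "Bq q a a = 1"
  using qpoch_nz[OF assms] by (simp add: Bq_def gauss_binom_def qpoch_def)

lemma Bq_pascal:
  fixes q :: "'a::field"
  assumes H: "\<forall>j\<in>{1..N}. q ^ j \<noteq> 1" and N: "Suc a \<le> N"
  shows "Bq q (Suc a) (Suc j) = Bq q a j + q ^ Suc j * Bq q a (Suc j)"
    and "Bq q (Suc a) (Suc j) = q ^ (a - j) * Bq q a j + Bq q a (Suc j)"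
proof -
  have "(Bq q (Suc a) (Suc j) = Bq q a j + q ^ Suc j * Bq q a (Suc j)) \<and>
        (Bq q (Suc a) (Suc j) = q ^ (a - j) * Bq q a j + Bq q a (Suc j))"
  proof (cases "a < j")
    case True then show ?thesis by (simp add: Bq_def)
  next
    case False
    show ?thesis
    proof (cases "j = a")
      case True
      then show ?thesis using Bq_diag[OF H N] Bq_diag[OF H, of a] N by (simp add: Bq_gt)
    next
      case False
      with \<open>\<not> a < j\<close> obtain e where a: "a = j + Suc e" by (metis add_Suc_right less_imp_Suc_add linorder_neqE_nat)
      have n1: "qpoch q q (Suc a) \<noteq> 0" "qpoch q q a \<noteq> 0" "qpoch q q (Suc j) \<noteq> 0"
           "qpoch q q j \<noteq> 0" "qpoch q q (Suc e) \<noteq> 0" "qpoch q q e \<noteq> 0"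
        using qpoch_nz[OF H] N a by auto
      have n2: "1 - q * q ^ j \<noteq> 0" "1 - q * q ^ e \<noteq> 0"
        using n1 by (auto simp: qpoch_Suc)
      have qa: "q ^ a = q ^ j * q ^ e * q" using a by (simp add: power_add)
      have e1: "Suc a - Suc j = Suc e" "a - j = Suc e" "a - Suc j = e" using a by auto
      have "gauss_binom (Suc a) (Suc j) q = gauss_binom a j q + q ^ Suc j * gauss_binom a (Suc j) q
         \<and> gauss_binom (Suc a) (Suc j) q = q ^ (a - j) * gauss_binom a j q + gauss_binom a (Suc j) q"
        unfolding gauss_binom_def e1 qpoch_Suc
        using alg_pascal(1)[where J="qpoch q q j" and E="qpoch q q e" and u="1 - q * q^j" and v="1 - q * q^e" and A="qpoch q q a" and q=q and x="q^j"]
          alg_pascal(2)[where J="qpoch q q j" and E="qpoch q q e" and u="1 - q * q^j" and v="1 - q * q^e" and A="qpoch q q a" and q=q and y="q^e"] n1 n2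
        by (simp add: qa algebra_simps)
      moreover have "Suc j \<le> a" "j \<le> a" using a by auto
      then have "Bq q (Suc a) (Suc j) = gauss_binom (Suc a) (Suc j) q" "Bq q a j = gauss_binom a j q"
        "Bq q a (Suc j) = gauss_binom a (Suc j) q" by (simp_all add: Bq_def)
      ultimately show ?thesis by argo
    qed
  qed
  then show "Bq q (Suc a) (Suc j) = Bq q a j + q ^ Suc j * Bq q a (Suc j)"
    and "Bq q (Suc a) (Suc j) = q ^ (a - j) * Bq q a j + Bq q a (Suc j)" by auto
qed

definition cc :: "'a::field \<Rightarrow> 'a \<Rightarrow> nat \<Rightarrow> 'a" where
  "cc q t k = q ^ (k * (k - 1) div 2) * (\<Prod>j<k. t + q ^ j)"

lemma tri: "Suc (k::nat) * k div 2 = k + k * (k - 1) div 2"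
proof -
  have "Suc k * k = k * (k - 1) + 2 * k" by (cases k) (simp_all add: algebra_simps)
  then show ?thesis by simp
qed

lemma tri2: "(k::nat) * (k + 1) div 2 = k + k * (k - 1) div 2"
  using tri[of k] by (simp add: mult.commute)

lemma cc_0: "cc q t 0 = 1" by (simp add: cc_def)

lemma cc_Suc: "cc q t (Suc k) = q ^ k * (q ^ k + t) * cc q t k"
  unfolding cc_def by (simp only: tri power_add prod.lessThan_Suc diff_Suc_1) (simp add: algebra_simps)

definition TT :: "'a::field \<Rightarrow> 'a \<Rightarrow> nat \<Rightarrow> nat \<Rightarrow> nat \<Rightarrow> 'a" where
  "TT q t N x y = (\<Sum>k<Suc N. q ^ k * cc q t k * Bq q x k * Bq q y k)"

lemma alg2:
  fixes X Y Z E0 E1 F0 F1 u c P t :: "'a::comm_ring_1"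
  assumes "X = E0 + u * E1" "X = Z + E1" "u * Z = P * E0" "Y = F0 + u * F1"
  shows "u*c*X*Y - u*c*E1*Y - P*(u*c*X*F1) - t*P*(u*c*E1*F1) = P*(c*E0*F0 - (u*(u+t)*c)*E1*F1)"
proof -
  have "u*c*X*Y - u*c*E1*Y = c * Y * (u * Z)" using assms(2) by (simp add: algebra_simps)
  also have "\<dots> = c * Y * (P * E0)" using assms(3) by simp
  finally have 1: "u*c*X*Y - u*c*E1*Y = c * Y * (P * E0)" .
  show ?thesis unfolding diff_diff_eq2[symmetric] 1 using assms(1,4) by (simp add: algebra_simps)
qed

lemma TT_shift:
  fixes q :: "'a::field"
  assumes H: "\<forall>j\<in>{1..N}. q ^ j \<noteq> 1" and "x \<le> N" "y \<le> N"
  shows "TT q t N x y = 1 + (\<Sum>j<N. q ^ Suc j * cc q t (Suc j) * Bq q x (Suc j) * Bq q y (Suc j))"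
  unfolding TT_def sum.lessThan_Suc_shift using Bq_0[OF H assms(2)] Bq_0[OF H assms(3)]
  by (simp add: cc_0)

lemma TT_rec:
  fixes q :: "'a::field"
  assumes H: "\<forall>j\<in>{1..N}. q ^ j \<noteq> 1" and N: "Suc a + Suc b \<le> N"
  shows "TT q t N (Suc a) (Suc b) = q ^ Suc a * TT q t N (Suc a) b + TT q t N a (Suc b)
          + t * q ^ Suc a * TT q t N a b"
proof -
  let ?B = "Bq q" and ?c = "cc q t" and ?P = "q ^ Suc a"
  define f where "f x y j = q ^ Suc j * ?c (Suc j) * ?B x (Suc j) * ?B y (Suc j)" for x y j
  define g where "g j = ?c (Suc j) * ?B a j * ?B b j" for j
  have step: "f (Suc a) (Suc b) j - f a (Suc b) j - ?P * f (Suc a) b j - t * ?P * f a b j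
      = ?P * (g j - g (Suc j))" for j
  proof -
    have A1: "Suc a \<le> N" "Suc b \<le> N" using N by auto
    have uz: "q ^ Suc j * (q ^ (a - j) * ?B a j) = ?P * ?B a j"
    proof (cases "j \<le> a")
      case True
      then have "q ^ Suc j * q ^ (a - j) = ?P" by (simp flip: power_add)
      then show ?thesis by (simp add: mult.assoc[symmetric])
    next
      case False then show ?thesis by (simp add: Bq_gt)
    qed
    have "f (Suc a) (Suc b) j - f a (Suc b) j - ?P * f (Suc a) b j - t * ?P * f a b j
       = q ^ Suc j * ?c (Suc j) * ?B (Suc a) (Suc j) * ?B (Suc b) (Suc j)
         - q ^ Suc j * ?c (Suc j) * ?B a (Suc j) * ?B (Suc b) (Suc j)
         - ?P * (q ^ Suc j * ?c (Suc j) * ?B (Suc a) (Suc j) * ?B b (Suc j))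
         - t * ?P * (q ^ Suc j * ?c (Suc j) * ?B a (Suc j) * ?B b (Suc j))"
      unfolding f_def by simp
    also have "\<dots> = ?P * (?c (Suc j) * ?B a j * ?B b j
        - (q ^ Suc j * (q ^ Suc j + t) * ?c (Suc j)) * ?B a (Suc j) * ?B b (Suc j))"
      by (rule alg2[OF Bq_pascal(1)[OF H A1(1)] Bq_pascal(2)[OF H A1(1)] uz Bq_pascal(1)[OF H A1(2)]])
    also have "\<dots> = ?P * (g j - g (Suc j))" unfolding g_def cc_Suc[of q t "Suc j"] by simp
    finally show ?thesis .
  qed
  have "(\<Sum>j<N. f (Suc a) (Suc b) j - f a (Suc b) j - ?P * f (Suc a) b j - t * ?P * f a b j)
      = ?P * (g 0 - g N)"
    unfolding step by (simp add: sum_distrib_left[symmetric] sum_lessThan_telescope')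
  also have "g 0 = 1 + t" unfolding g_def using Bq_0[OF H, of a] Bq_0[OF H, of b] N
    by (simp add: cc_def)
  also have "g N = 0" unfolding g_def using N by (simp add: Bq_gt)
  finally have S: "(\<Sum>j<N. f (Suc a) (Suc b) j) - (\<Sum>j<N. f a (Suc b) j)
      - ?P * (\<Sum>j<N. f (Suc a) b j) - t * ?P * (\<Sum>j<N. f a b j) = ?P * (1 + t)"
    by (simp add: sum_subtractf sum_distrib_left)
  have T: "TT q t N x y = 1 + (\<Sum>j<N. f x y j)" if "x \<le> N" "y \<le> N" for x y
    unfolding f_def using TT_shift[OF H that] by simp
  show ?thesis using S N by (simp add: T algebra_simps)
qed

lemma op_0n: "overpartitions 0 n = {({#}, {})}"
proof -
  have e: "(\<forall>x\<in>#P. 0 < x \<and> x \<le> (0::nat)) \<longleftrightarrow> P = {#}" for P by (cases P) auto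
  show ?thesis unfolding overpartitions_def e by auto
qed

lemma op_m0: "overpartitions m 0 = {({#}, {})}"
  unfolding overpartitions_def by auto

lemma op_notin: "(P, Ov) \<in> overpartitions m n \<Longrightarrow> Suc m \<notin># P \<and> Suc m \<notin> Ov"
proof -
  assume "(P, Ov) \<in> overpartitions m n"
  then have h: "\<forall>y\<in>#P. 0 < y \<and> y \<le> m" "Ov \<subseteq> set_mset P" by (auto simp: overpartitions_def)
  have 1: "Suc m \<notin># P"
  proof
    assume "Suc m \<in># P"
    then have "Suc m \<le> m" using h(1) by blast
    then show False by simp
  qed
  moreover have "Suc m \<notin> Ov" using 1 h(2) by blast
  ultimately show ?thesis by blast
qed

lemma op_split:
  "overpartitions (Suc m) (Suc n) = overpartitions m (Suc n)
     \<union> (\<lambda>(P, Ov). (add_mset (Suc m) P, Ov)) ` overpartitions (Suc m) n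
     \<union> (\<lambda>(P, Ov). (add_mset (Suc m) P, insert (Suc m) Ov)) ` overpartitions m n"
  (is "?L = ?A \<union> ?B \<union> ?C")
proof
  have "?A \<subseteq> ?L"
  proof (clarify)
    fix P Ov assume "(P, Ov) \<in> ?A"
    then have "\<forall>y\<in>#P. 0 < y \<and> y \<le> m" "size P \<le> Suc n" "Ov \<subseteq> set_mset P"
      unfolding overpartitions_def by auto
    then show "(P, Ov) \<in> ?L" unfolding overpartitions_def by (simp add: le_SucI)
  qed
  moreover have "(add_mset (Suc m) P, Ov) \<in> ?L" if "(P, Ov) \<in> overpartitions (Suc m) n" for P Ov
  proof -
    have "\<forall>y\<in>#P. 0 < y \<and> y \<le> Suc m" "size P \<le> n" "Ov \<subseteq> set_mset P"
      using that unfolding overpartitions_def by auto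
    then show ?thesis unfolding overpartitions_def by auto
  qed
  then have "?B \<subseteq> ?L" by auto
  moreover have "(add_mset (Suc m) P, insert (Suc m) Ov) \<in> ?L" if "(P, Ov) \<in> overpartitions m n" for P Ov
  proof -
    have "\<forall>y\<in>#P. 0 < y \<and> y \<le> m" "size P \<le> n" "Ov \<subseteq> set_mset P"
      using that unfolding overpartitions_def by auto
    then show ?thesis unfolding overpartitions_def by (auto simp: le_SucI)
  qed
  then have "?C \<subseteq> ?L" by auto
  ultimately show "?A \<union> ?B \<union> ?C \<subseteq> ?L" by blast
next
  show "?L \<subseteq> ?A \<union> ?B \<union> ?C"
  proof
    fix x assume x: "x \<in> ?L"
    obtain P Ov where xe: "x = (P, Ov)" by (cases x)
    have P1: "\<forall>y\<in>#P. 0 < y \<and> y \<le> Suc m" and P2: "size P \<le> Suc n" and P3: "Ov \<subseteq> set_mset P"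
      using x unfolding xe overpartitions_def by auto
    show "x \<in> ?A \<union> ?B \<union> ?C"
    proof (cases "Suc m \<in># P")
      case False
      then have "\<forall>y\<in>#P. 0 < y \<and> y \<le> m" using P1 by (metis le_SucE)
      then have "x \<in> ?A" using P2 P3 unfolding xe overpartitions_def by auto
      then show ?thesis by blast
    next
      case True
      define P' where "P' = P - {#Suc m#}"
      have PP: "P = add_mset (Suc m) P'" unfolding P'_def using True by simp
      have s': "size P' \<le> n" using P2 PP by simp
      have p': "\<forall>y\<in>#P'. 0 < y \<and> y \<le> Suc m" using P1 PP by simp
      show ?thesis
      proof (cases "Suc m \<in> Ov \<and> Suc m \<notin># P'")
        case True
        then have "\<forall>y\<in>#P'. 0 < y \<and> y \<le> m" using p' by (metis le_SucE)
        moreover have "Ov - {Suc m} \<subseteq> set_mset P'" using P3 PP by auto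
        ultimately have "(P', Ov - {Suc m}) \<in> overpartitions m n" using s'
          unfolding overpartitions_def by auto
        moreover have "x = (add_mset (Suc m) P', insert (Suc m) (Ov - {Suc m}))"
          using True PP xe by auto
        ultimately have "x \<in> ?C" by (auto intro!: image_eqI)
        then show ?thesis by blast
      next
        case False
        then have "Ov \<subseteq> set_mset P'" using P3 PP by auto
        then have "(P', Ov) \<in> overpartitions (Suc m) n" using s' p'
          unfolding overpartitions_def by auto
        moreover have "x = (add_mset (Suc m) P', Ov)" using PP xe by auto
        ultimately have "x \<in> ?B" by (auto intro!: image_eqI)
        then show ?thesis by blast
      qed
    qed
  qed
qed

lemma op_finite: "finite (overpartitions m n)"
proof (induction m arbitrary: n)
  case 0 then show ?case by (simp add: op_0n)
next
  case (Suc m)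
  note IHm = Suc.IH
  show ?case
  proof (induction n)
    case 0 then show ?case by (simp add: op_m0)
  next
    case (Suc n)
    then show ?case using IHm by (simp add: op_split)
  qed
qed

definition GG :: "'a::comm_ring_1 \<Rightarrow> 'a \<Rightarrow> nat \<Rightarrow> nat \<Rightarrow> 'a" where
  "GG q t m n = (\<Sum>(P, Ov)\<in>overpartitions m n. t ^ card Ov * q ^ sum_mset P)"

lemma GG_0n: "GG q t 0 n = 1" by (simp add: GG_def op_0n)
lemma GG_m0: "GG q t m 0 = 1" by (simp add: GG_def op_m0)

lemma GG_rec:
  "GG q t (Suc m) (Suc n) = q ^ Suc m * GG q t (Suc m) n + GG q t m (Suc n) + t * q ^ Suc m * GG q t m n"
proof -
  let ?w = "\<lambda>(P, Ov). t ^ card Ov * q ^ sum_mset P"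
  let ?A = "overpartitions m (Suc n)"
  let ?f = "\<lambda>(P, Ov). (add_mset (Suc m) P, Ov)"
  let ?g = "\<lambda>(P, Ov). (add_mset (Suc m) P, insert (Suc m) Ov)"
  let ?B = "overpartitions (Suc m) n"
  let ?C = "overpartitions m n"
  have fA: "finite ?A" "finite (?f ` ?B)" "finite (?g ` ?C)" using op_finite by auto
  have d1: "?A \<inter> ?f ` ?B = {}" unfolding overpartitions_def by auto
  have d2: "(?A \<union> ?f ` ?B) \<inter> ?g ` ?C = {}"
  proof -
    have "x \<notin> ?A" if "x \<in> ?g ` ?C" for x using that unfolding overpartitions_def by auto
    moreover have "x \<notin> ?f ` ?B" if "x \<in> ?g ` ?C" for x
    proof
      assume "x \<in> ?f ` ?B"
      then obtain P Ov where PO: "(P, Ov) \<in> ?B" "x = (add_mset (Suc m) P, Ov)" by auto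
      obtain P' Ov' where PO': "(P', Ov') \<in> ?C" "x = (add_mset (Suc m) P', insert (Suc m) Ov')"
        using \<open>x \<in> ?g ` ?C\<close> by auto
      have "Suc m \<notin># P'" using PO'(1) unfolding overpartitions_def by auto
      moreover have "P = P'" "Ov = insert (Suc m) Ov'" using PO PO' by auto
      moreover have "Ov \<subseteq> set_mset P" using PO(1) unfolding overpartitions_def by auto
      ultimately show False by auto
    qed
    ultimately show ?thesis by blast
  qed
  have if_: "inj_on ?f ?B" by (auto simp: inj_on_def)
  have ig: "inj_on ?g ?C"
  proof (rule inj_onI, clarsimp)
    fix P Ov P' Ov' assume a: "(P, Ov) \<in> ?C" "(P', Ov') \<in> ?C" "insert (Suc m) Ov = insert (Suc m) Ov'"
    then have "Suc m \<notin> Ov" "Suc m \<notin> Ov'" using op_notin by blast+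
    then show "Ov = Ov'" using a(3) by (metis insert_ident)
  qed
  have wf: "?w (?f x) = q ^ Suc m * ?w x" for x by (cases x) (simp add: algebra_simps power_add)
  have wg: "?w (?g x) = t * q ^ Suc m * ?w x" if "x \<in> ?C" for x
  proof -
    obtain P Ov where x: "x = (P, Ov)" by (cases x)
    have "Suc m \<notin> Ov" using that op_notin unfolding x by blast
    moreover have "finite Ov" using that unfolding x overpartitions_def
      by (auto intro: finite_subset)
    ultimately show ?thesis unfolding x by (simp add: algebra_simps power_add)
  qed
  have "GG q t (Suc m) (Suc n) = sum ?w ?A + sum ?w (?f ` ?B) + sum ?w (?g ` ?C)"
    unfolding GG_def op_split using fA d1 d2 by (simp add: sum.union_disjoint)
  also have "sum ?w (?f ` ?B) = q ^ Suc m * GG q t (Suc m) n"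
    unfolding GG_def sum.reindex[OF if_] comp_def wf by (simp add: sum_distrib_left)
  also have "sum ?w (?g ` ?C) = t * q ^ Suc m * GG q t m n"
    unfolding GG_def sum.reindex[OF ig] comp_def sum_distrib_left using wg by (intro sum.cong) auto
  finally show ?thesis unfolding GG_def by (simp add: algebra_simps)
qed

lemma TT_0n:
  fixes q :: "'a::field"
  assumes H: "\<forall>j\<in>{1..N}. q ^ j \<noteq> 1" and "y \<le> N"
  shows "TT q t N 0 y = 1" "TT q t N y 0 = 1"
  using TT_shift[OF H _ assms(2), of 0 t] TT_shift[OF H assms(2), of 0 t] by (simp_all add: Bq_gt)

lemma GG_TT:
  fixes q :: "'a::field"
  assumes H: "\<forall>j\<in>{1..N}. q ^ j \<noteq> 1"
  shows "m + n \<le> N \<Longrightarrow> GG q t m n = TT q t N m n"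
proof (induction m arbitrary: n)
  case 0 then show ?case using TT_0n[OF H, of n t] by (simp add: GG_0n)
next
  case (Suc m)
  note IHm = Suc.IH
  show ?case using Suc.prems
  proof (induction n)
    case 0 then show ?case using TT_0n[OF H, of "Suc m" t] by (simp add: GG_m0)
  next
    case (Suc n)
    then show ?case using IHm[of n] IHm[of "Suc n"] TT_rec[OF H Suc.prems]
      by (simp add: GG_rec)
  qed
qed

theorem proposition2p5:
  fixes m n :: nat and q t :: "'a::field"
  assumes "\<forall>j\<in>{1..m+n}. q ^ j \<noteq> 1"
  shows "overline_gauss m n q t =
    (\<Sum>k=0..min m n. q ^ (k * (k + 1) div 2) * (\<Prod>j<k. t + q ^ j)
        * gauss_binom m k q * gauss_binom n k q)"
proof -
  have "overline_gauss m n q t = GG q t m n" by (simp add: overline_gauss_def GG_def)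
  also have "\<dots> = TT q t (m + n) m n" using GG_TT[OF assms] by simp
  also have "\<dots> = (\<Sum>k=0..min m n. q ^ (k * (k + 1) div 2) * (\<Prod>j<k. t + q ^ j)
        * gauss_binom m k q * gauss_binom n k q)"
    unfolding TT_def
  proof (rule sum.mono_neutral_cong_right)
    show "finite {..<Suc (m + n)}" by simp
    show "{0..min m n} \<subseteq> {..<Suc (m + n)}" by auto
    show "\<forall>i\<in>{..<Suc (m + n)} - {0..min m n}. q ^ i * cc q t i * Bq q m i * Bq q n i = 0"
      by (auto simp: Bq_gt)
    show "q ^ x * cc q t x * Bq q m x * Bq q n x = q ^ (x * (x + 1) div 2) * (\<Prod>j<x. t + q ^ j)
        * gauss_binom m x q * gauss_binom n x q" if "x \<in> {0..min m n}" for x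
    proof -
      have "q ^ (x * (x + 1) div 2) = q ^ x * q ^ (x * (x - 1) div 2)"
        by (simp only: tri2 power_add)
      then show ?thesis using that by (simp add: Bq_def cc_def)
    qed
  qed
  finally show ?thesis .
qed

end
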